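(* Let $F:\mathbb{R}^N\times\mathbb{R}\to\mathbb{R}$ be a generating family for a Legendrian knot with $F(x,t)=x_1$ outside a compact subset of $\mathbb{R}^N\times\mathbb{R}$, and let $w(x,y,t)=F(x,t)-F(y,t)$ on $\mathbb{R}^{2N}\times\mathbb{R}$. Then there exists a fiber preserving diffeomorphism $\varphi:\mathbb{R}^{2N}\times\mathbb{R}\to\mathbb{R}^{2N}\times\mathbb{R}$, $\varphi(x,y,t)=(\Phi(x,y,t),t)$, such that $\alpha=w\circ\varphi$ satisfies $\alpha(x,y,t)=x_1-y_1$ outside a compact subset.
   Context: A generating family: a smooth $F:\mathbb{R}^N\times\mathbb{R}\to\mathbb{R}$, $f_t=F(\cdot,t)$, with $0$ a regular value of $(\partial F/\partial x_1,\dots,\partial F/\partial x_N)$; its fiberwise critical set is immersed as a Legendrian curve in $(\mathbb{R}^3,\ker(dz-y\,dx))$ by $(x,t)\mapsto(t,\partial F/\partial t,F)$. Coordinates on $\mathbb{R}^{2N}$ are $(x,y)$ with $x,y\in\mathbb{R}^N$. *)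

theory Defs
  imports "HOL-Analysis.Analysis"
begin

definition iter_dderiv :: "'a::real_normed_vector list \<Rightarrow> ('a \<Rightarrow> 'b::real_normed_vector) \<Rightarrow> 'a \<Rightarrow> 'b" where
  "iter_dderiv vs f = foldr (\<lambda>v g. \<lambda>x. frechet_derivative g (at x) v) vs f"

definition smooth :: "('a::euclidean_space \<Rightarrow> 'b::real_normed_vector) \<Rightarrow> bool" where
  "smooth f \<longleftrightarrow> (\<forall>vs x. iter_dderiv vs f differentiable (at x))"

definition diffeomorphism :: "('a::euclidean_space \<Rightarrow> 'a) \<Rightarrow> bool" where
  "diffeomorphism \<phi> \<longleftrightarrow> (\<exists>\<psi>. smooth \<phi> \<and> smooth \<psi> \<and> (\<forall>p. \<psi> (\<phi> p) = p) \<and> (\<forall>p. \<phi> (\<psi> p) = p))"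

definition fib_grad :: "((real^'n) \<times> real \<Rightarrow> real) \<Rightarrow> (real^'n) \<times> real \<Rightarrow> real^'n" where
  "fib_grad F p = (\<chi> i. frechet_derivative F (at p) (axis i 1, 0))"

definition t_deriv :: "((real^'n) \<times> real \<Rightarrow> real) \<Rightarrow> (real^'n) \<times> real \<Rightarrow> real" where
  "t_deriv F p = frechet_derivative F (at p) (0, 1)"

definition fib_crit :: "((real^'n) \<times> real \<Rightarrow> real) \<Rightarrow> ((real^'n) \<times> real) set" where
  "fib_crit F = {p. fib_grad F p = 0}"

text \<open>Generating family: smooth, and 0 is a regular value of the fiber derivative.\<close>
definition generating_family :: "((real^'n) \<times> real \<Rightarrow> real) \<Rightarrow> bool" where
  "generating_family F \<longleftrightarrow> smooth F \<and>
     (\<forall>p \<in> fib_crit F. surj (frechet_derivative (fib_grad F) (at p)))"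

definition legendrian_map :: "((real^'n) \<times> real \<Rightarrow> real) \<Rightarrow> (real^'n) \<times> real \<Rightarrow> real \<times> real \<times> real" where
  "legendrian_map F p = (snd p, t_deriv F p, F p)"

definition generates_legendrian_knot :: "((real^'n) \<times> real \<Rightarrow> real) \<Rightarrow> bool" where
  "generates_legendrian_knot F \<longleftrightarrow> generating_family F \<and> fib_crit F \<noteq> {} \<and>
     connected (fib_crit F) \<and> inj_on (legendrian_map F) (fib_crit F)"

end

theory Submission
  imports Defs
begin


fun Ck :: "nat \<Rightarrow> ('a::real_normed_vector \<Rightarrow> 'b::real_normed_vector) \<Rightarrow> bool" where
  "Ck 0 f = (\<forall>x. f differentiable (at x))"
| "Ck (Suc n) f = ((\<forall>x. f differentiable (at x)) \<and> (\<forall>v. Ck n (\<lambda>x. frechet_derivative f (at x) v)))"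

lemma Ck_diff: "Ck n f \<Longrightarrow> f differentiable (at x)"
  by (cases n) auto

lemma Ck_hasd: "Ck n f \<Longrightarrow> (f has_derivative frechet_derivative f (at x)) (at x)"
  using Ck_diff frechet_derivative_works by blast

lemma Ck_mono: "Ck (Suc n) f \<Longrightarrow> Ck n f"
proof (induction n arbitrary: f)
  case 0 then show ?case by simp
next
  case (Suc n) then show ?case by (metis Ck.simps(2))
qed

lemma fd_eq: "(f has_derivative f') (at x) \<Longrightarrow> frechet_derivative f (at x) = f'"
  using frechet_derivative_at by metis

lemma iter_snoc: "iter_dderiv (vs @ [v]) f = iter_dderiv vs (\<lambda>x. frechet_derivative f (at x) v)"
  by (simp add: iter_dderiv_def)

lemma Ck_iter: "Ck n f \<Longrightarrow> length vs \<le> n \<Longrightarrow> iter_dderiv vs f differentiable (at x)"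
proof (induction n arbitrary: f vs)
  case 0 then show ?case by (simp add: iter_dderiv_def)
next
  case (Suc n)
  show ?case
  proof (cases vs rule: rev_exhaust)
    case Nil then show ?thesis using Suc.prems Ck_diff by (simp add: iter_dderiv_def)
  next
    case (snoc us v)
    then show ?thesis using Suc by (simp add: iter_snoc)
  qed
qed

lemma Ck_smooth: "(\<And>n. Ck n f) \<Longrightarrow> smooth f"
  unfolding smooth_def using Ck_iter by blast

lemma smooth_Ck: "smooth (f::'a::euclidean_space \<Rightarrow> 'b::real_normed_vector) \<Longrightarrow> Ck n f"
proof (induction n arbitrary: f)
  case 0 then show ?case using iter_dderiv_def smooth_def
    by (metis Ck.simps(1) foldr_Nil id_apply)
next
  case (Suc n)
  have "\<forall>x. f differentiable (at x)" using Suc.prems unfolding smooth_def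
    by (metis foldr_Nil id_apply iter_dderiv_def)
  moreover have "smooth (\<lambda>x. frechet_derivative f (at x) v)" for v
    using Suc.prems unfolding smooth_def by (metis iter_snoc)
  ultimately show ?case using Suc.IH by simp
qed

lemma Ck_const: "Ck n (\<lambda>x. c)"
proof (induction n arbitrary: c)
  case 0 then show ?case by simp
next
  case (Suc n) then show ?case by simp
qed

lemma Ck_linear: "bounded_linear L \<Longrightarrow> Ck n L"
proof (cases n)
  case 0 assume "bounded_linear L" then show ?thesis using 0
    by (auto simp: differentiable_def intro: bounded_linear_imp_has_derivative)
next
  case (Suc m) assume L: "bounded_linear L"
  have "frechet_derivative L (at x) = L" for x
    by (rule fd_eq[OF bounded_linear_imp_has_derivative[OF L]])
  then show ?thesis using Suc L Ck_const
    by (auto simp: differentiable_def intro: bounded_linear_imp_has_derivative)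
qed

lemma Ck_add: "Ck n f \<Longrightarrow> Ck n g \<Longrightarrow> Ck n (\<lambda>x. f x + g x)"
proof (induction n arbitrary: f g)
  case 0 then show ?case by (simp add: differentiable_add)
next
  case (Suc n)
  have "frechet_derivative (\<lambda>x. f x + g x) (at x) = (\<lambda>v. frechet_derivative f (at x) v + frechet_derivative g (at x) v)" for x
    by (rule fd_eq, rule has_derivative_add[OF Ck_hasd[OF Suc.prems(1)] Ck_hasd[OF Suc.prems(2)]])
  then show ?case using Suc by (simp add: differentiable_add)
qed

lemma Ck_scale: "Ck n (a::'a::real_normed_vector \<Rightarrow> real) \<Longrightarrow> Ck n b \<Longrightarrow> Ck n (\<lambda>x. a x *\<^sub>R b x)"
proof (induction n arbitrary: a b)
  case 0 then show ?case by (simp add: differentiable_scaleR)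
next
  case (Suc n)
  have "frechet_derivative (\<lambda>x. a x *\<^sub>R b x) (at x) = (\<lambda>v. a x *\<^sub>R frechet_derivative b (at x) v + frechet_derivative a (at x) v *\<^sub>R b x)" for x
    by (rule fd_eq, rule has_derivative_scaleR[OF Ck_hasd[OF Suc.prems(1)] Ck_hasd[OF Suc.prems(2)]])
  moreover have "Ck n a" "Ck n b" using Ck_mono[OF Suc.prems(1)] Ck_mono[OF Suc.prems(2)] by auto
  moreover have "Ck n (\<lambda>x. a x *\<^sub>R frechet_derivative b (at x) v + frechet_derivative a (at x) v *\<^sub>R b x)" for v
    using Ck_add[OF Suc.IH[OF \<open>Ck n a\<close>] Suc.IH[OF _ \<open>Ck n b\<close>]] Suc.prems by auto
  ultimately show ?case using Suc.prems by (simp add: differentiable_scaleR)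
qed

lemma Ck_lincomp: "bounded_linear L \<Longrightarrow> Ck n f \<Longrightarrow> Ck n (\<lambda>x. L (f x))"
proof (induction n arbitrary: f)
  case 0
  have "(\<lambda>x. L (f x)) differentiable (at x)" for x
    using bounded_linear.has_derivative[OF 0(1) Ck_hasd[OF 0(2)]] differentiable_def by blast
  then show ?case by simp
next
  case (Suc n)
  have d: "(\<lambda>x. L (f x)) differentiable (at x)" for x
    using bounded_linear.has_derivative[OF Suc.prems(1) Ck_hasd[OF Suc.prems(2)]] differentiable_def by blast
  have "frechet_derivative (\<lambda>x. L (f x)) (at x) = (\<lambda>v. L (frechet_derivative f (at x) v))" for x
    by (rule fd_eq, rule bounded_linear.has_derivative[OF Suc.prems(1) Ck_hasd[OF Suc.prems(2)]])
  moreover have "Ck n (\<lambda>x. L (frechet_derivative f (at x) v))" for v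
    using Suc.IH[OF Suc.prems(1)] Suc.prems(2) by simp
  ultimately show ?case using d by simp
qed

lemma Ck_sum: "finite I \<Longrightarrow> (\<And>i. i \<in> I \<Longrightarrow> Ck n (f i)) \<Longrightarrow> Ck n (\<lambda>x. \<Sum>i\<in>I. f i x)"
proof (induction I rule: finite_induct)
  case empty then show ?case using Ck_const by simp
next
  case (insert i I) then show ?case using Ck_add[of n "f i"] by simp
qed

lemma lin_expand:
  assumes "linear (G::'c::euclidean_space \<Rightarrow> 'b::real_normed_vector)"
  shows "G w = (\<Sum>i\<in>Basis. (w \<bullet> i) *\<^sub>R G i)"
proof -
  have "G w = G (\<Sum>i\<in>Basis. (w \<bullet> i) *\<^sub>R i)" by (simp add: euclidean_representation)
  also have "\<dots> = (\<Sum>i\<in>Basis. (w \<bullet> i) *\<^sub>R G i)"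
    using assms by (simp add: linear_sum linear_scale o_def)
  finally show ?thesis .
qed

lemma Ck_comp: "Ck n (f::'a::real_normed_vector \<Rightarrow> 'c::euclidean_space) \<Longrightarrow> Ck n (g::'c \<Rightarrow> 'b::real_normed_vector) \<Longrightarrow> Ck n (\<lambda>x. g (f x))"
proof (induction n arbitrary: f g)
  case 0 then show ?case using differentiable_chain_at[of f _ g] by (simp add: o_def)
next
  case (Suc n)
  have dif: "(\<lambda>x. g (f x)) differentiable (at x)" for x
    using differentiable_chain_at[of f x g] Suc.prems Ck_diff by (auto simp add: o_def)
  have "frechet_derivative (\<lambda>x. g (f x)) (at x) = frechet_derivative g (at (f x)) \<circ> frechet_derivative f (at x)" for x
    using fd_eq[OF diff_chain_at[OF Ck_hasd[OF Suc.prems(1)] Ck_hasd[OF Suc.prems(2)]]] by (simp add: o_def)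
  note fc = this
  have eq: "frechet_derivative (\<lambda>x. g (f x)) (at x) v = (\<Sum>i\<in>Basis. (frechet_derivative f (at x) v \<bullet> i) *\<^sub>R frechet_derivative g (at (f x)) i)" for x v
  proof -
    have "frechet_derivative (\<lambda>x. g (f x)) (at x) v = frechet_derivative g (at (f x)) (frechet_derivative f (at x) v)"
      using fc by simp
    also have "\<dots> = (\<Sum>i\<in>Basis. (frechet_derivative f (at x) v \<bullet> i) *\<^sub>R frechet_derivative g (at (f x)) i)"
      by (rule lin_expand[OF has_derivative_linear[OF Ck_hasd[OF Suc.prems(2)]]])
    finally show ?thesis .
  qed
  have "Ck n (\<lambda>x. frechet_derivative (\<lambda>x. g (f x)) (at x) v)" for v
    unfolding eq
  proof (rule Ck_sum, simp, rule Ck_scale)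
    fix i :: 'c
    show "Ck n (\<lambda>x. frechet_derivative f (at x) v \<bullet> i)"
      using Ck_lincomp[OF bounded_linear_inner_left, of n "\<lambda>x. frechet_derivative f (at x) v"] Suc.prems by simp
    show "Ck n (\<lambda>x. frechet_derivative g (at (f x)) i)"
      using Suc.IH[of f "\<lambda>y. frechet_derivative g (at y) i"] Ck_mono[OF Suc.prems(1)] Suc.prems(2) by simp
  qed
  then show ?case using dif by simp
qed


lemma shear_Ck:
  assumes P: "bounded_linear P" and cC: "\<And>n. Ck n (c :: 'c::euclidean_space \<Rightarrow> real)"
  shows "Ck n (\<lambda>p::'a::euclidean_space. p + (s * c (P p)) *\<^sub>R E)"
proof -
  have "Ck n (\<lambda>p. (s *\<^sub>R c (P p)) *\<^sub>R E)"
    by (rule Ck_scale[OF Ck_scale[OF Ck_const Ck_comp[OF Ck_linear[OF P] cC]] Ck_const])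
  then have "Ck n (\<lambda>p::'a. p + (s *\<^sub>R c (P p)) *\<^sub>R E)"
    using Ck_add[OF Ck_linear[OF bounded_linear_ident]] by blast
  then show ?thesis by simp
qed

theorem proposition6p6:
  fixes F :: "(real^'n) \<times> real \<Rightarrow> real" and k :: 'n
  assumes "generates_legendrian_knot F"
    and "\<exists>K. compact K \<and> (\<forall>p. p \<notin> K \<longrightarrow> F p = fst p $ k)"
  shows "\<exists>\<phi> :: ((real^'n) \<times> (real^'n)) \<times> real \<Rightarrow> ((real^'n) \<times> (real^'n)) \<times> real.
           diffeomorphism \<phi> \<and> (\<forall>p. snd (\<phi> p) = snd p) \<and>
           (\<exists>K. compact K \<and> (\<forall>x y t. ((x, y), t) \<notin> K \<longrightarrow>
               (let ((x', y'), t') = \<phi> ((x, y), t) in F (x', t') - F (y', t')) = x $ k - y $ k))"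
proof -
  obtain K where K: "compact K" "\<And>p. p \<notin> K \<Longrightarrow> F p = fst p $ k" using assms(2) by blast
  have sF: "smooth F" using assms(1) unfolding generates_legendrian_knot_def generating_family_def by blast
  define c where "c = (\<lambda>p::(real^'n)\<times>real. F p + (- (fst p $ k)))"
  have c0: "p \<notin> K \<Longrightarrow> c p = 0" for p using K(2) by (simp add: c_def)
  have Fc: "F (z, t) = z $ k + c (z, t)" for z t by (simp add: c_def)
  have blk: "bounded_linear (\<lambda>p::(real^'n)\<times>real. - (fst p $ k))"
    by (rule bounded_linear_minus[OF bounded_linear_compose[OF bounded_linear_vec_nth bounded_linear_fst]])
  have cC: "Ck n c" for n
    unfolding c_def by (rule Ck_add[OF smooth_Ck[OF sF] Ck_linear[OF blk]])
  have "continuous_on K c"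
    by (intro continuous_at_imp_continuous_on ballI differentiable_imp_continuous_within Ck_diff[OF cC])
  then have "compact (c ` K)" using K(1) compact_continuous_image by blast
  note cK = this
  obtain M0 where M0: "\<And>z. z \<in> c ` K \<Longrightarrow> norm z \<le> M0" using compact_imp_bounded[OF cK] unfolding bounded_iff by blast
  define M where "M = max M0 0"
  have cM: "\<bar>c p\<bar> \<le> M" for p
    using M0[of "c p"] c0[of p] unfolding M_def by (cases "p \<in> K") auto
  have M0': "M \<ge> 0" unfolding M_def by simp
  obtain R0 where R0: "\<And>p. p \<in> K \<Longrightarrow> norm p \<le> R0" using compact_imp_bounded[OF K(1)] unfolding bounded_iff by blast
  define R where "R = max R0 0"
  have cnz: "c (z, t) \<noteq> 0 \<Longrightarrow> norm z \<le> R \<and> \<bar>t\<bar> \<le> R" for z t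
  proof -
    assume "c (z, t) \<noteq> 0"
    then have "(z, t) \<in> K" using c0 by blast
    then have "norm (z, t) \<le> R" using R0 unfolding R_def by force
    then show ?thesis using norm_fst_le[of z t] norm_snd_le[of t z] by auto
  qed
  define e where "e = (axis k (1::real) :: real^'n)"
  have ne: "norm e = 1" unfolding e_def by simp
  define E1 where "E1 = (((0::real^'n), e), (0::real))"
  define E2 where "E2 = ((e, (0::real^'n)), (0::real))"
  define Px where "Px = (\<lambda>p::((real^'n)\<times>(real^'n))\<times>real. (fst (fst p), snd p))"
  define Py where "Py = (\<lambda>p::((real^'n)\<times>(real^'n))\<times>real. (snd (fst p), snd p))"
  have bPx: "bounded_linear Px" unfolding Px_def
    by (intro bounded_linear_Pair bounded_linear_compose[OF bounded_linear_fst bounded_linear_fst] bounded_linear_snd)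
  have bPy: "bounded_linear Py" unfolding Py_def
    by (intro bounded_linear_Pair bounded_linear_compose[OF bounded_linear_snd bounded_linear_fst] bounded_linear_snd)
  define s1 where "s1 = (\<lambda>a::real. \<lambda>p. p + (a * c (Px p)) *\<^sub>R E1)"
  define s2 where "s2 = (\<lambda>a::real. \<lambda>p. p + (a * c (Py p)) *\<^sub>R E2)"
  have s1C: "Ck n (s1 a)" for n a unfolding s1_def by (rule shear_Ck[OF bPx cC])
  have s2C: "Ck n (s2 a)" for n a unfolding s2_def by (rule shear_Ck[OF bPy cC])
  have s1e: "s1 a ((x, y), t) = ((x, y + (a * c (x, t)) *\<^sub>R e), t)" for a x y t
    by (simp add: s1_def Px_def E1_def)
  have s2e: "s2 a ((x, y), t) = ((x + (a * c (y, t)) *\<^sub>R e, y), t)" for a x y t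
    by (simp add: s2_def Py_def E2_def)
  have i1: "s1 (-1) (s1 1 p) = p" "s1 1 (s1 (-1) p) = p" for p
    by (cases p; auto simp: s1e)+
  have i2: "s2 (-1) (s2 1 p) = p" "s2 1 (s2 (-1) p) = p" for p
    by (cases p; auto simp: s2e)+
  define \<phi> where "\<phi> = (\<lambda>p. s1 1 (s2 1 p))"
  define \<psi> where "\<psi> = (\<lambda>p. s2 (-1) (s1 (-1) p))"
  have "diffeomorphism \<phi>"
    unfolding diffeomorphism_def
  proof (intro exI[of _ \<psi>] conjI allI)
    show "smooth \<phi>" unfolding \<phi>_def by (rule Ck_smooth, rule Ck_comp[OF s2C s1C])
    show "smooth \<psi>" unfolding \<psi>_def by (rule Ck_smooth, rule Ck_comp[OF s1C s2C])
    show "\<psi> (\<phi> p) = p" for p unfolding \<phi>_def \<psi>_def using i1 i2 by simp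
    show "\<phi> (\<psi> p) = p" for p unfolding \<phi>_def \<psi>_def using i1 i2 by simp
  qed
  moreover have "snd (\<phi> p) = snd p" for p
    by (cases p) (auto simp: \<phi>_def s1e s2e)
  moreover
  define B where "B = R + M"
  define K' where "K' = (cball (0::real^'n) B \<times> cball (0::real^'n) B) \<times> cball (0::real) R"
  have "compact K'" unfolding K'_def by (intro compact_Times compact_cball)
  moreover have "(let ((x', y'), t') = \<phi> ((x, y), t) in F (x', t') - F (y', t')) = x $ k - y $ k"
    if nK: "((x, y), t) \<notin> K'" for x y t
  proof -
    define x1 where "x1 = x + c (y, t) *\<^sub>R e"
    define y1 where "y1 = y + c (x1, t) *\<^sub>R e"
    have ph: "\<phi> ((x, y), t) = ((x1, y1), t)"
      by (simp add: \<phi>_def s1e s2e x1_def y1_def)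
    have ek: "e $ k = 1" unfolding e_def by simp
    have val: "F (x1, t) - F (y1, t) = x $ k - y $ k + c (y, t) - c (y1, t)"
      unfolding Fc by (simp add: x1_def y1_def ek algebra_simps)
    have "c (y, t) = c (y1, t)"
    proof (cases "\<bar>t\<bar> \<le> R")
      case False then show ?thesis using cnz[of y t] cnz[of y1 t] by force
    next
      case True
      have nb: "norm (a + r *\<^sub>R e) \<ge> norm a - M" if "\<bar>r\<bar> \<le> M" for a r
        using norm_triangle_ineq4[of "a + r *\<^sub>R e" "r *\<^sub>R e"] that ne by auto
      show ?thesis
      proof (cases "norm x \<le> B")
        case False
        then have "norm x1 > R" using nb[OF cM, of x "(y,t)"] unfolding x1_def B_def by linarith
        then have "c (x1, t) = 0" using cnz by force
        then show ?thesis by (simp add: y1_def)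
      next
        case True
        then have "norm y > B" using nK \<open>\<bar>t\<bar> \<le> R\<close> unfolding K'_def by auto
        then have "norm y > R" "norm y1 > R"
          using nb[OF cM, of y "(x1,t)"] M0' unfolding y1_def B_def by linarith+
        then show ?thesis using cnz[of y t] cnz[of y1 t] by force
      qed
    qed
    then show ?thesis using ph val by simp
  qed
  ultimately show ?thesis by blast
qed



end
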